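(* Let $G$ be a graph with vertex order $v_1,\ldots,v_n$, let $D$ be a minimal dominating set of $G$, let $u,w\in D$ be adjacent, and let $v\in P_D(u)$. Let $X_{uv}$, $D'$, $D^*$ and $Z_{uv}$ be as defined in the context. Then $D^*$ is a minimal dominating set of $G$, $X_{uv}\cup\{v\}\subseteq D^*$, $|E(G[D^*])|<|E(G[D])|$, and $v$ is an isolated vertex of $G[D^*]$.
   Context: Graphs are finite, simple, undirected; $N(x)$ is the open and $N[x]=N(x)\cup\{x\}$ the closed neighborhood, $N[S]=\bigcup_{x\in S}N[x]$. A dominating set is $D\subseteq V(G)$ with $N[D]=V(G)$; it is minimal if no proper subset is dominating. For a dominating set $D$ and $x\in D$, a vertex $y$ is private for $x$ if $y\in N[x]\setminus N[D\setminus\{x\}]$; $P_D[x]$ is the set of such $y$ and $P_D(x)=P_D[x]\cap N(x)$. Fix an order $v_1,\ldots,v_n$ of $V(G)$. Greedy removal from a dominating set $D'$: while the current set $S$ is not a minimal dominating set, remove from $S$ the vertex $v_i$ of smallest index $i$ such that $S\setminus\{v_i\}$ is still dominating. Given $D,u,v$: $X_{uv}$ is built by starting from $\emptyset$ and repeatedly adding the smallest-index vertex of $P_D(u)\setminus N[\{v\}\cup X_{uv}]$ while this set is nonempty (so $X_{uv}$ is a maximal independent set of $G[P_D(u)\setminus N[v]]$). Let $D'=(D\setminus\{u\})\cup X_{uv}\cup\{v\}$ (a dominating set), let $D^*$ be the result of greedy removal from $D'$, and $Z_{uv}=D'\setminus D^*$. *)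

theory Defs
  imports Main "HOL-Library.While_Combinator"
begin

definition graph :: "'a set \<Rightarrow> ('a \<Rightarrow> 'a \<Rightarrow> bool) \<Rightarrow> bool" where
  "graph V E \<longleftrightarrow> finite V \<and> (\<forall>x y. E x y \<longrightarrow> x \<in> V \<and> y \<in> V)
     \<and> (\<forall>x y. E x y \<longrightarrow> E y x) \<and> (\<forall>x. \<not> E x x)"

definition nbh :: "('a \<Rightarrow> 'a \<Rightarrow> bool) \<Rightarrow> 'a \<Rightarrow> 'a set" where
  "nbh E x = {y. E x y}"

definition cnbh :: "('a \<Rightarrow> 'a \<Rightarrow> bool) \<Rightarrow> 'a \<Rightarrow> 'a set" where
  "cnbh E x = insert x (nbh E x)"

definition cnbhs :: "('a \<Rightarrow> 'a \<Rightarrow> bool) \<Rightarrow> 'a set \<Rightarrow> 'a set" where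
  "cnbhs E S = (\<Union>x\<in>S. cnbh E x)"

definition dominating :: "'a set \<Rightarrow> ('a \<Rightarrow> 'a \<Rightarrow> bool) \<Rightarrow> 'a set \<Rightarrow> bool" where
  "dominating V E D \<longleftrightarrow> D \<subseteq> V \<and> cnbhs E D = V"

definition minimal_dominating :: "'a set \<Rightarrow> ('a \<Rightarrow> 'a \<Rightarrow> bool) \<Rightarrow> 'a set \<Rightarrow> bool" where
  "minimal_dominating V E D \<longleftrightarrow> dominating V E D \<and> (\<forall>D'. D' \<subset> D \<longrightarrow> \<not> dominating V E D')"

definition priv_closed :: "('a \<Rightarrow> 'a \<Rightarrow> bool) \<Rightarrow> 'a set \<Rightarrow> 'a \<Rightarrow> 'a set" where
  "priv_closed E D x = cnbh E x - cnbhs E (D - {x})"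

definition priv_open :: "('a \<Rightarrow> 'a \<Rightarrow> bool) \<Rightarrow> 'a set \<Rightarrow> 'a \<Rightarrow> 'a set" where
  "priv_open E D x = priv_closed E D x \<inter> nbh E x"

definition induced_edges :: "('a \<Rightarrow> 'a \<Rightarrow> bool) \<Rightarrow> 'a set \<Rightarrow> 'a set set" where
  "induced_edges E S = {{x, y} | x y. x \<in> S \<and> y \<in> S \<and> E x y}"

definition isolated_in :: "('a \<Rightarrow> 'a \<Rightarrow> bool) \<Rightarrow> 'a set \<Rightarrow> 'a \<Rightarrow> bool" where
  "isolated_in E S v \<longleftrightarrow> v \<in> S \<and> (\<forall>y\<in>S. \<not> E v y)"

text \<open>The vertex order v_1,...,v_n is given by an injective index function idx on V;
  min_idx idx A is the vertex of A with smallest index.\<close>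
definition min_idx :: "('a \<Rightarrow> nat) \<Rightarrow> 'a set \<Rightarrow> 'a" where
  "min_idx idx A = (SOME x. x \<in> A \<and> (\<forall>y\<in>A. idx x \<le> idx y))"

definition greedy_removal :: "'a set \<Rightarrow> ('a \<Rightarrow> 'a \<Rightarrow> bool) \<Rightarrow> ('a \<Rightarrow> nat) \<Rightarrow> 'a set \<Rightarrow> 'a set" where
  "greedy_removal V E idx D' =
     while (\<lambda>S. \<not> minimal_dominating V E S)
           (\<lambda>S. S - {min_idx idx {x \<in> S. dominating V E (S - {x})}}) D'"

definition X_set :: "('a \<Rightarrow> 'a \<Rightarrow> bool) \<Rightarrow> ('a \<Rightarrow> nat) \<Rightarrow> 'a set \<Rightarrow> 'a \<Rightarrow> 'a \<Rightarrow> 'a set" where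
  "X_set E idx D u v =
     while (\<lambda>X. priv_open E D u - cnbhs E ({v} \<union> X) \<noteq> {})
           (\<lambda>X. insert (min_idx idx (priv_open E D u - cnbhs E ({v} \<union> X))) X) {}"

definition D'_set :: "('a \<Rightarrow> 'a \<Rightarrow> bool) \<Rightarrow> ('a \<Rightarrow> nat) \<Rightarrow> 'a set \<Rightarrow> 'a \<Rightarrow> 'a \<Rightarrow> 'a set" where
  "D'_set E idx D u v = (D - {u}) \<union> X_set E idx D u v \<union> {v}"

definition Dstar_set :: "'a set \<Rightarrow> ('a \<Rightarrow> 'a \<Rightarrow> bool) \<Rightarrow> ('a \<Rightarrow> nat) \<Rightarrow> 'a set \<Rightarrow> 'a \<Rightarrow> 'a \<Rightarrow> 'a set" where
  "Dstar_set V E idx D u v = greedy_removal V E idx (D'_set E idx D u v)"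

definition Z_set :: "'a set \<Rightarrow> ('a \<Rightarrow> 'a \<Rightarrow> bool) \<Rightarrow> ('a \<Rightarrow> nat) \<Rightarrow> 'a set \<Rightarrow> 'a \<Rightarrow> 'a \<Rightarrow> 'a set" where
  "Z_set V E idx D u v = D'_set E idx D u v - Dstar_set V E idx D u v"

end

theory Submission
  imports Defs
begin

lemma min_idx_in: "A \<noteq> {} \<Longrightarrow> min_idx idx A \<in> A"
proof -
  assume "A \<noteq> {}"
  then obtain k where "k \<in> A" by blast
  then have "\<exists>x. x \<in> A \<and> (\<forall>y. y \<in> A \<longrightarrow> idx x \<le> idx y)"
    by (rule ex_has_least_nat)
  then have "\<exists>x. x \<in> A \<and> (\<forall>y\<in>A. idx x \<le> idx y)" by blast
  then show ?thesis unfolding min_idx_def by (rule someI2_ex) blast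
qed

lemma X_props:
  assumes "graph V E"
  shows "X_set E idx D u v \<subseteq> priv_open E D u
     \<and> X_set E idx D u v \<inter> cnbh E v = {}
     \<and> (\<forall>a\<in>X_set E idx D u v. \<forall>b\<in>X_set E idx D u v. \<not> E a b)
     \<and> priv_open E D u - cnbhs E ({v} \<union> X_set E idx D u v) = {}"
proof -
  define P where "P = priv_open E D u"
  have finP: "finite P"
  proof -
    have "P \<subseteq> V" using assms unfolding P_def priv_open_def nbh_def graph_def by blast
    then show ?thesis using assms finite_subset unfolding graph_def by blast
  qed
  show ?thesis
    unfolding X_set_def P_def[symmetric]
  proof (rule while_rule[where P="\<lambda>X. X \<subseteq> P \<and> X \<inter> cnbh E v = {} \<and> (\<forall>a\<in>X. \<forall>b\<in>X. \<not> E a b)"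
        and r="measure (\<lambda>X. card (P - X))"])
    show "{} \<subseteq> P \<and> {} \<inter> cnbh E v = {} \<and> (\<forall>a\<in>{}. \<forall>b\<in>{}. \<not> E a b)" by simp
  next
    fix X assume I: "X \<subseteq> P \<and> X \<inter> cnbh E v = {} \<and> (\<forall>a\<in>X. \<forall>b\<in>X. \<not> E a b)"
      and b: "P - cnbhs E ({v} \<union> X) \<noteq> {}"
    define m where "m = min_idx idx (P - cnbhs E ({v} \<union> X))"
    have m: "m \<in> P - cnbhs E ({v} \<union> X)" using min_idx_in[OF b] m_def by simp
    have mv: "m \<notin> cnbh E v" using m unfolding cnbhs_def by blast
    have mX: "\<forall>a\<in>X. m \<noteq> a \<and> \<not> E a m" using m unfolding cnbhs_def cnbh_def nbh_def by blast
    have sym: "\<And>x y. E x y \<Longrightarrow> E y x" and irr: "\<And>x. \<not> E x x" using assms unfolding graph_def by blast+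
    show "insert m X \<subseteq> P \<and> insert m X \<inter> cnbh E v = {} \<and> (\<forall>a\<in>insert m X. \<forall>b\<in>insert m X. \<not> E a b)"
      using I m mv mX sym irr by blast
  next
    fix X assume I: "X \<subseteq> P \<and> X \<inter> cnbh E v = {} \<and> (\<forall>a\<in>X. \<forall>b\<in>X. \<not> E a b)"
      and b: "\<not> P - cnbhs E ({v} \<union> X) \<noteq> {}"
    show "X \<subseteq> P \<and> X \<inter> cnbh E v = {} \<and> (\<forall>a\<in>X. \<forall>b\<in>X. \<not> E a b) \<and> P - cnbhs E ({v} \<union> X) = {}"
      using I b by blast
  next
    show "wf (measure (\<lambda>X. card (P - X)))" by simp
  next
    fix X assume I: "X \<subseteq> P \<and> X \<inter> cnbh E v = {} \<and> (\<forall>a\<in>X. \<forall>b\<in>X. \<not> E a b)"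
      and b: "P - cnbhs E ({v} \<union> X) \<noteq> {}"
    define m where "m = min_idx idx (P - cnbhs E ({v} \<union> X))"
    have m: "m \<in> P - cnbhs E ({v} \<union> X)" using min_idx_in[OF b] m_def by simp
    have "m \<notin> X" using m unfolding cnbhs_def cnbh_def by blast
    then have "P - insert m X \<subset> P - X" using m by blast
    then have "card (P - insert m X) < card (P - X)"
      using finP by (meson finite_Diff psubset_card_mono)
    then show "(insert m X, X) \<in> measure (\<lambda>X. card (P - X))"
      using m_def by simp
  qed
qed

lemma dom_mono:
  assumes "graph V E" "dominating V E S" "S \<subseteq> T" "T \<subseteq> V"
  shows "dominating V E T"
proof -
  have "cnbhs E T \<subseteq> V" using assms(1,4) unfolding graph_def cnbhs_def cnbh_def nbh_def by blast
  moreover have "cnbhs E S \<subseteq> cnbhs E T" using assms(3) unfolding cnbhs_def by blast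
  ultimately show ?thesis using assms unfolding dominating_def by blast
qed

theorem lemma1:
  fixes V :: "'a set" and E :: "'a \<Rightarrow> 'a \<Rightarrow> bool" and idx :: "'a \<Rightarrow> nat"
    and D :: "'a set" and u w v :: 'a
  assumes "graph V E"
    and "inj_on idx V"
    and "minimal_dominating V E D"
    and "u \<in> D" and "w \<in> D" and "E u w"
    and "v \<in> priv_open E D u"
  shows "minimal_dominating V E (Dstar_set V E idx D u v)
       \<and> X_set E idx D u v \<union> {v} \<subseteq> Dstar_set V E idx D u v
       \<and> card (induced_edges E (Dstar_set V E idx D u v)) < card (induced_edges E D)
       \<and> isolated_in E (Dstar_set V E idx D u v) v"
proof -
  define X where "X = X_set E idx D u v"
  define D' where "D' = D'_set E idx D u v"
  define P where "P = priv_open E D u"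
  have D'eq: "D' = (D - {u}) \<union> X \<union> {v}" unfolding D'_def D'_set_def X_def by simp
  have g: "finite V" "\<And>x y. E x y \<Longrightarrow> x \<in> V" "\<And>x y. E x y \<Longrightarrow> y \<in> V"
    "\<And>x y. E x y \<Longrightarrow> E y x" "\<And>x. \<not> E x x" using assms(1) unfolding graph_def by blast+
  have domD: "dominating V E D" using assms(3) unfolding minimal_dominating_def by blast
  have DV: "D \<subseteq> V" using domD unfolding dominating_def by blast
  have Xp: "X \<subseteq> P" "X \<inter> cnbh E v = {}" "\<forall>a\<in>X. \<forall>b\<in>X. \<not> E a b"
    "P - cnbhs E ({v} \<union> X) = {}"
    using X_props[OF assms(1), of idx D u v] unfolding X_def P_def by blast+
  have Pdef: "\<And>x. x \<in> P \<longleftrightarrow> E u x \<and> (\<forall>y\<in>D - {u}. x \<noteq> y \<and> \<not> E y x)"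
    unfolding P_def priv_open_def priv_closed_def cnbhs_def cnbh_def nbh_def by blast
  have vP: "v \<in> P" using assms(7) P_def by simp
  have Xv: "\<And>x. x \<in> X \<Longrightarrow> x \<noteq> v \<and> \<not> E v x" using Xp(2) unfolding cnbh_def nbh_def by blast
  have iso: "\<And>x y. x \<in> X \<union> {v} \<Longrightarrow> y \<in> D' \<Longrightarrow> \<not> E x y"
  proof -
    fix x y assume x: "x \<in> X \<union> {v}" and y: "y \<in> D'"
    have xP: "x \<in> P" using x Xp(1) vP by blast
    show "\<not> E x y"
    proof
      assume e: "E x y"
      have "y \<notin> D - {u}" using xP Pdef e g(4) by blast
      then have "y \<in> X \<union> {v}" using y D'eq by blast
      then show False using x e Xp(3) Xv g(4) g(5) by blast
    qed
  qed
  have XV: "X \<subseteq> V" using Xp(1) Pdef g(3) by blast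
  have vV: "v \<in> V" using vP Pdef g(3) by blast
  have D'V: "D' \<subseteq> V" using D'eq DV XV vV by blast
  have uw: "u \<noteq> w" using assms(6) g(5) by blast
  have domD': "dominating V E D'"
  proof -
    have "V \<subseteq> cnbhs E D'"
    proof
      fix z assume "z \<in> V"
      then have "z \<in> cnbhs E D" using domD unfolding dominating_def by blast
      then obtain y where y: "y \<in> D" "z \<in> cnbh E y" unfolding cnbhs_def by blast
      show "z \<in> cnbhs E D'"
      proof (cases "y = u")
        case False then show ?thesis using y D'eq unfolding cnbhs_def by blast
      next
        case True
        show ?thesis
        proof (cases "\<exists>y'\<in>D - {u}. z \<in> cnbh E y'")
          case True then show ?thesis using D'eq unfolding cnbhs_def by blast
        next
          case False
          have "z \<noteq> u" using False assms(5,6) uw g(4)[OF assms(6)] unfolding cnbh_def nbh_def by blast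
          then have "E u z" using y True unfolding cnbh_def nbh_def by simp
          moreover have "\<forall>y'\<in>D - {u}. z \<noteq> y' \<and> \<not> E y' z"
            using False unfolding cnbh_def nbh_def by simp
          ultimately have "z \<in> P" using Pdef by simp
          then have "z \<in> cnbhs E ({v} \<union> X)" using Xp(4) by blast
          then show ?thesis using D'eq unfolding cnbhs_def by blast
        qed
      qed
    qed
    moreover have "cnbhs E D' \<subseteq> V" using D'V g unfolding cnbhs_def cnbh_def nbh_def by blast
    ultimately show ?thesis using D'V unfolding dominating_def by blast
  qed
  define Ds where "Ds = Dstar_set V E idx D u v"
  have DsP: "dominating V E Ds \<and> X \<union> {v} \<subseteq> Ds \<and> Ds \<subseteq> D' \<and> minimal_dominating V E Ds"
    unfolding Ds_def Dstar_set_def greedy_removal_def D'_def[symmetric]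
  proof (rule while_rule[where P="\<lambda>S. dominating V E S \<and> X \<union> {v} \<subseteq> S \<and> S \<subseteq> D'"
        and r="measure card"])
    show "dominating V E D' \<and> X \<union> {v} \<subseteq> D' \<and> D' \<subseteq> D'" using domD' D'eq by blast
  next
    fix S assume I: "dominating V E S \<and> X \<union> {v} \<subseteq> S \<and> S \<subseteq> D'"
      and b: "\<not> minimal_dominating V E S"
    define A where "A = {x \<in> S. dominating V E (S - {x})}"
    have "A \<noteq> {}"
    proof -
      obtain T where T: "T \<subset> S" "dominating V E T" using b I unfolding minimal_dominating_def by blast
      then obtain x where x: "x \<in> S" "x \<notin> T" by blast
      have "dominating V E (S - {x})"
        using dom_mono[OF assms(1) T(2), of "S - {x}"] T x I D'V by blast
      then show ?thesis using x A_def by blast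
    qed
    then have m: "min_idx idx A \<in> A" by (rule min_idx_in)
    define m where "m = min_idx idx A"
    have mA: "m \<in> S" "dominating V E (S - {m})" using m m_def A_def by blast+
    have "m \<notin> X \<union> {v}"
    proof
      assume mx: "m \<in> X \<union> {v}"
      have "m \<in> cnbhs E (S - {m})" using mA I D'V unfolding dominating_def by blast
      then obtain y where "y \<in> S - {m}" "m \<in> cnbh E y" unfolding cnbhs_def by blast
      then have "y \<in> D'" "E y m" using I unfolding cnbh_def nbh_def by blast+
      then show False using iso[OF mx] g(4) by blast
    qed
    then show "dominating V E (S - {min_idx idx {x \<in> S. dominating V E (S - {x})}})
       \<and> X \<union> {v} \<subseteq> S - {min_idx idx {x \<in> S. dominating V E (S - {x})}}
       \<and> S - {min_idx idx {x \<in> S. dominating V E (S - {x})}} \<subseteq> D'"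
      unfolding A_def[symmetric] m_def[symmetric] using mA I
      by blast
  next
    fix S assume I: "dominating V E S \<and> X \<union> {v} \<subseteq> S \<and> S \<subseteq> D'"
      and b: "\<not> \<not> minimal_dominating V E S"
    show "dominating V E S \<and> X \<union> {v} \<subseteq> S \<and> S \<subseteq> D' \<and> minimal_dominating V E S" using I b by blast
  next
    show "wf (measure card)" by simp
  next
    fix S assume I: "dominating V E S \<and> X \<union> {v} \<subseteq> S \<and> S \<subseteq> D'"
      and b: "\<not> minimal_dominating V E S"
    define A where "A = {x \<in> S. dominating V E (S - {x})}"
    have "A \<noteq> {}"
    proof -
      obtain T where T: "T \<subset> S" "dominating V E T" using b I unfolding minimal_dominating_def by blast
      then obtain x where x: "x \<in> S" "x \<notin> T" by blast
      have "dominating V E (S - {x})"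
        using dom_mono[OF assms(1) T(2), of "S - {x}"] T x I D'V by blast
      then show ?thesis using x A_def by blast
    qed
    then have "min_idx idx A \<in> A" by (rule min_idx_in)
    moreover have "A \<subseteq> S" unfolding A_def by (rule Collect_restrict)
    ultimately have m: "min_idx idx A \<in> S" by (rule subsetD[rotated])
    have "S \<subseteq> V" using I D'V by blast
    then have fS: "finite S" using g(1) by (rule finite_subset)
    have "card (S - {min_idx idx A}) < card S" by (rule card_Diff1_less[OF fS m])
    then show "(S - {min_idx idx {x \<in> S. dominating V E (S - {x})}}, S) \<in> measure card"
      unfolding A_def[symmetric] by (simp only: in_measure)
  qed
  have uDs: "u \<notin> Ds"
  proof
    assume "u \<in> Ds"
    then have "u \<in> D'" using DsP by blast
    moreover have "u \<notin> X" using Xp(1) Pdef g(5) by blast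
    moreover have "u \<noteq> v" using vP Pdef g(5) by blast
    ultimately show False using D'eq by blast
  qed
  have sub: "induced_edges E Ds \<subseteq> induced_edges E D"
  proof
    fix e assume "e \<in> induced_edges E Ds"
    then obtain x y where e: "e = {x, y}" "x \<in> Ds" "y \<in> Ds" "E x y" unfolding induced_edges_def by blast
    have "x \<notin> X \<union> {v}" using iso e DsP by blast
    moreover have "y \<notin> X \<union> {v}" using iso e DsP g(4) by blast
    ultimately have "x \<in> D" "y \<in> D" using e DsP D'eq by blast+
    then show "e \<in> induced_edges E D" using e unfolding induced_edges_def by blast
  qed
  have uwe1: "{u, w} \<in> induced_edges E D"
    using assms(4,5,6) unfolding induced_edges_def by blast
  have uwe2: "{u, w} \<notin> induced_edges E Ds"
  proof
    assume "{u, w} \<in> induced_edges E Ds"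
    then obtain x y where xy: "{u, w} = {x, y}" "x \<in> Ds" "y \<in> Ds" unfolding induced_edges_def by blast
    have "u \<in> {x, y}" using xy(1) by (metis insertI1)
    then show False using xy uDs by blast
  qed
  have uwe: "{u, w} \<in> induced_edges E D - induced_edges E Ds" using uwe1 uwe2 by blast
  have fin: "finite (induced_edges E D)"
  proof -
    have "induced_edges E D \<subseteq> Pow D" unfolding induced_edges_def by blast
    moreover have "finite D" using DV g(1) by (rule finite_subset)
    ultimately show ?thesis using finite_subset by blast
  qed
  have card: "card (induced_edges E Ds) < card (induced_edges E D)"
  proof (rule psubset_card_mono[OF fin])
    show "induced_edges E Ds \<subset> induced_edges E D" using sub uwe by blast
  qed
  have isol: "isolated_in E Ds v" using DsP iso unfolding isolated_in_def by blast
  show ?thesis using DsP card isol unfolding Ds_def X_def by blast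
qed

end
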